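(* There exists a chain $\mathcal{J}\subset\mathcal{L}$ (totally ordered by inclusion) with $|\mathcal{J}|=\mathfrak{c}$ such that all spaces $(\mathbb{R},\tau)$ with $\tau\in\mathcal{J}$ are completely metrizable and pairwise homeomorphic.
   Context: $\mathfrak{c}=|\mathbb{R}|$. $\eta$ denotes the Euclidean topology on $\mathbb{R}$. $\mathcal{L}$ denotes the family of all Hausdorff topologies $\tau$ on $\mathbb{R}$ with $\tau\subset\eta$. *)

theory Defs
  imports "HOL-Analysis.Analysis" "HOL-Library.Equipollence"
begin

definition coarser :: "'a topology \<Rightarrow> 'a topology \<Rightarrow> bool" where
  "coarser \<tau> \<sigma> \<longleftrightarrow> {S. openin \<tau> S} \<subseteq> {S. openin \<sigma> S}"

definition L_family :: "real topology set" where
  "L_family = {\<tau>. topspace \<tau> = UNIV \<and> Hausdorff_space \<tau> \<and> coarser \<tau> euclidean}"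

end

theory Submission
  imports Defs
begin

definition Ttop :: "(real \<Rightarrow> real) \<Rightarrow> real topology" where
  "Ttop s = topology (\<lambda>U. open U \<and> (0 \<in> U \<longrightarrow> (\<exists>e>0. {x. s x < e} \<subseteq> U)))"

lemma istop_T:
  fixes s :: "real \<Rightarrow> real"
  shows "istopology (\<lambda>U. open U \<and> (0 \<in> U \<longrightarrow> (\<exists>e>0. {x. s x < e} \<subseteq> (U::real set))))"
  unfolding istopology_def
proof (rule conjI; intro allI impI)
  fix S T :: "real set"
  assume a: "open S \<and> (0 \<in> S \<longrightarrow> (\<exists>e>0. {x. s x < e} \<subseteq> S))" "open T \<and> (0 \<in> T \<longrightarrow> (\<exists>e>0. {x. s x < e} \<subseteq> T))"
  show "open (S \<inter> T) \<and> (0 \<in> S \<inter> T \<longrightarrow> (\<exists>e>0. {x. s x < e} \<subseteq> S \<inter> T))"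
  proof (intro conjI impI)
    show "open (S \<inter> T)" using a by auto
    assume "0 \<in> S \<inter> T"
    then obtain e1 e2 where "e1>0" "{x. s x < e1} \<subseteq> S" "e2>0" "{x. s x < e2} \<subseteq> T" using a by auto
    then have "{x. s x < min e1 e2} \<subseteq> S \<inter> T" by auto
    moreover have "min e1 e2 > 0" using \<open>e1>0\<close> \<open>e2>0\<close> by simp
    ultimately show "\<exists>e>0. {x. s x < e} \<subseteq> S \<inter> T" by blast
  qed
next
  fix K :: "real set set"
  assume a: "\<forall>S\<in>K. open S \<and> (0 \<in> S \<longrightarrow> (\<exists>e>0. {x. s x < e} \<subseteq> S))"
  show "open (\<Union>K) \<and> (0 \<in> \<Union>K \<longrightarrow> (\<exists>e>0. {x. s x < e} \<subseteq> \<Union>K))"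
  proof (intro conjI impI)
    show "open (\<Union>K)" using a by auto
    assume "0 \<in> \<Union>K"
    then obtain S where "S \<in> K" "0 \<in> S" by auto
    then show "\<exists>e>0. {x. s x < e} \<subseteq> \<Union>K" using a by blast
  qed
qed

lemma openin_T: "openin (Ttop s) U \<longleftrightarrow> open U \<and> (0 \<in> U \<longrightarrow> (\<exists>e>0. {x. s x < e} \<subseteq> U))"
  unfolding Ttop_def topology_inverse'[OF istop_T] ..

lemma topspace_T [simp]: "topspace (Ttop s) = UNIV"
proof -
  have "openin (Ttop s) UNIV" unfolding openin_T by (auto intro: exI[of _ 1])
  then show ?thesis by (metis openin_subset top.extremum_uniqueI)
qed

lemma coarser_T_eucl: "coarser (Ttop s) euclidean"
  unfolding coarser_def by (auto simp: openin_T)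

lemma coarser_TT:
  assumes "\<And>e. e > 0 \<Longrightarrow> \<exists>e'>0. \<forall>x. s2 x < e' \<longrightarrow> s1 x < e"
  shows "coarser (Ttop s1) (Ttop s2)"
  unfolding coarser_def
proof clarify
  fix U assume "openin (Ttop s1) U"
  then have U: "open U" "0 \<in> U \<Longrightarrow> \<exists>e>0. {x. s1 x < e} \<subseteq> U" by (auto simp: openin_T)
  show "openin (Ttop s2) U" unfolding openin_T
  proof (intro conjI impI)
    show "open U" by fact
    assume "0 \<in> U"
    then obtain e where "e>0" "{x. s1 x < e} \<subseteq> U" using U by auto
    then obtain e' where "e'>0" "\<forall>x. s2 x < e' \<longrightarrow> s1 x < e" using assms by blast
    then show "\<exists>e>0. {x. s2 x < e} \<subseteq> U" using \<open>{x. s1 x < e} \<subseteq> U\<close> by blast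
  qed
qed

lemma neq_TT:
  assumes c1: "continuous_on UNIV s1" and z: "s1 0 = 0"
    and "e > 0" and "\<And>e'. e' > 0 \<Longrightarrow> \<exists>x. s2 x < e' \<and> s1 x \<ge> e"
  shows "Ttop s1 \<noteq> Ttop s2"
proof
  assume eq: "Ttop s1 = Ttop s2"
  have "open {x. s1 x < e}"
    using c1 by (simp add: open_Collect_less continuous_on_const)
  then have "openin (Ttop s1) {x. s1 x < e}" using \<open>e>0\<close> by (auto simp: openin_T)
  then have "openin (Ttop s2) {x. s1 x < e}" using eq by simp
  moreover have "0 \<in> {x. s1 x < e}" using z \<open>e>0\<close> by simp
  ultimately obtain e' where "e'>0" "{x. s2 x < e'} \<subseteq> {x. s1 x < e}" by (auto simp: openin_T)
  then show False using assms(4)[of e'] by force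
qed

lemma cms_T:
  fixes s :: "real \<Rightarrow> real"
  assumes cont: "continuous_on UNIV s" and z: "s 0 = 0" and pos: "\<And>x. x \<noteq> 0 \<Longrightarrow> s x > 0"
  shows "completely_metrizable_space (Ttop s)"
proof -
  have nn: "s x \<ge> 0" for x using z pos by (cases "x = 0") (auto intro: less_imp_le)
  define d where "d x y = min (\<bar>x - y\<bar> + \<bar>s x - s y\<bar>) (s x + s y)" for x y
  have dxy_le: "d x y \<le> \<bar>x - y\<bar> + \<bar>s x - s y\<bar>" for x y unfolding d_def by simp
  have d_big: "d x y < s x \<Longrightarrow> d x y = \<bar>x - y\<bar> + \<bar>s x - s y\<bar>" for x y
    using nn[of y] unfolding d_def by auto
  have d0: "d 0 y = s y" for y using nn[of y] z unfolding d_def by auto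
  have ms: "Metric_space UNIV d"
  proof
    fix x y z
    show "0 \<le> d x y" using nn[of x] nn[of y] unfolding d_def by simp
    show "d x y = d y x" unfolding d_def by (simp add: abs_minus_commute add.commute)
    show "d x y = 0 \<longleftrightarrow> x = y"
    proof
      assume "d x y = 0"
      then have "\<bar>x - y\<bar> + \<bar>s x - s y\<bar> = 0 \<or> s x + s y = 0" unfolding d_def by (metis min_def)
      then show "x = y"
      proof
        assume "s x + s y = 0" then have "s x = 0" "s y = 0" using nn[of x] nn[of y] by auto
        then show "x = y" using pos by (metis less_irrefl)
      qed auto
    qed (simp add: d_def nn)
    show "d x z \<le> d x y + d y z"
      using nn[of x] nn[of y] nn[of z] unfolding d_def by (simp add: min_def) linarith
  qed
  interpret M: Metric_space UNIV d by (fact ms)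
  have sc: "\<exists>\<delta>>0. \<forall>y. \<bar>y - x\<bar> < \<delta> \<longrightarrow> \<bar>s y - s x\<bar> < e" if "e > 0" for x e
  proof -
    have "isCont s x" using cont by (simp add: continuous_on_eq_continuous_at)
    then show ?thesis using that unfolding continuous_at_eps_delta dist_real_def by blast
  qed
  have dsmall: "\<exists>\<delta>>0. \<forall>y. \<bar>y - x\<bar> < \<delta> \<longrightarrow> d x y < r" if "r > 0" for x r
  proof -
    obtain \<delta> where "\<delta> > 0" and \<delta>: "\<forall>y. \<bar>y - x\<bar> < \<delta> \<longrightarrow> \<bar>s y - s x\<bar> < r/2"
      using sc[of "r/2" x] \<open>r>0\<close> by auto
    show ?thesis
    proof (intro exI[of _ "min \<delta> (r/2)"] conjI allI impI)
      show "min \<delta> (r/2) > 0" using \<open>\<delta>>0\<close> \<open>r>0\<close> by simp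
      fix y assume "\<bar>y - x\<bar> < min \<delta> (r/2)"
      then have "\<bar>y - x\<bar> < r/2" "\<bar>s y - s x\<bar> < r/2" using \<delta> by auto
      then show "d x y < r" using dxy_le[of x y] by (simp add: abs_minus_commute)
    qed
  qed
  have top: "M.mtopology = Ttop s"
  proof (rule topology_eq[THEN iffD2], intro allI iffI)
    fix U assume "openin M.mtopology U"
    then have U: "\<And>x. x \<in> U \<Longrightarrow> \<exists>r>0. M.mball x r \<subseteq> U" by (simp add: M.openin_mtopology)
    show "openin (Ttop s) U" unfolding openin_T
    proof (intro conjI impI)
      show "open U" unfolding open_dist dist_real_def
      proof (intro ballI)
        fix x assume "x \<in> U"
        then obtain r where "r > 0" "M.mball x r \<subseteq> U" using U by blast
        then obtain \<delta> where "\<delta>>0" "\<forall>y. \<bar>y - x\<bar> < \<delta> \<longrightarrow> d x y < r" using dsmall by blast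
        then show "\<exists>e>0. \<forall>y. \<bar>y - x\<bar> < e \<longrightarrow> y \<in> U" using \<open>M.mball x r \<subseteq> U\<close>
          by (metis M.in_mball UNIV_I subsetD)
      qed
      assume "0 \<in> U"
      then obtain r where "r > 0" "M.mball 0 r \<subseteq> U" using U by blast
      moreover have "{x. s x < r} \<subseteq> M.mball 0 r" using d0 by auto
      ultimately show "\<exists>e>0. {x. s x < e} \<subseteq> U" by blast
    qed
  next
    fix U assume "openin (Ttop s) U"
    then have U: "open U" "0 \<in> U \<Longrightarrow> \<exists>e>0. {x. s x < e} \<subseteq> U" by (auto simp: openin_T)
    show "openin M.mtopology U" unfolding M.openin_mtopology
    proof (intro conjI allI impI)
      show "U \<subseteq> UNIV" by simp
      fix x assume "x \<in> U"
      show "\<exists>r>0. M.mball x r \<subseteq> U"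
      proof (cases "x = 0")
        case True
        then obtain e where "e>0" "{x. s x < e} \<subseteq> U" using U \<open>x \<in> U\<close> by auto
        then show ?thesis using True d0 by (intro exI[of _ e]) auto
      next
        case False
        obtain \<delta> where "\<delta>>0" "\<forall>y. \<bar>y - x\<bar> < \<delta> \<longrightarrow> y \<in> U"
          using U(1) \<open>x \<in> U\<close> unfolding open_dist dist_real_def by blast
        show ?thesis
        proof (intro exI[of _ "min \<delta> (s x)"] conjI subsetI)
          show "min \<delta> (s x) > 0" using pos[OF False] \<open>\<delta>>0\<close> by simp
          fix y assume "y \<in> M.mball x (min \<delta> (s x))"
          then have "d x y < \<delta>" "d x y < s x" by auto
          then have "\<bar>y - x\<bar> < \<delta>" using d_big[of x y] by (simp add: abs_minus_commute)
          then show "y \<in> U" using \<open>\<forall>y. \<bar>y - x\<bar> < \<delta> \<longrightarrow> y \<in> U\<close> by blast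
        qed
      qed
    qed
  qed
  have comp: "M.mcomplete"
    unfolding M.mcomplete_def
  proof (intro allI impI)
    fix f :: "nat \<Rightarrow> real" assume "M.MCauchy f"
    then have C: "\<And>e. e > 0 \<Longrightarrow> \<exists>N. \<forall>n n'. N \<le> n \<longrightarrow> N \<le> n' \<longrightarrow> d (f n) (f n') < e"
      by (simp add: M.MCauchy_def)
    show "\<exists>x. limitin M.mtopology f x sequentially"
    proof (cases "\<forall>e>0. \<forall>N. \<exists>k\<ge>N. s (f k) < e")
      case True
      have "limitin M.mtopology f 0 sequentially"
        unfolding M.limitin_metric eventually_sequentially
      proof (intro conjI allI impI)
        fix e :: real assume "e > 0"
        then obtain N where N: "\<forall>n n'. N \<le> n \<longrightarrow> N \<le> n' \<longrightarrow> d (f n) (f n') < e/2"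
          using C[of "e/2"] by auto
        obtain k where "k \<ge> N" "s (f k) < e/2" using True \<open>e>0\<close> by (meson half_gt_zero)
        show "\<exists>N. \<forall>n\<ge>N. f n \<in> UNIV \<and> d (f n) 0 < e"
        proof (intro exI[of _ N] allI impI conjI)
          fix n assume "n \<ge> N"
          have "d (f n) 0 \<le> d (f n) (f k) + d (f k) 0" using M.triangle by simp
          also have "d (f k) 0 = s (f k)" using d0 M.commute by metis
          finally show "d (f n) 0 < e" using N \<open>n \<ge> N\<close> \<open>k \<ge> N\<close> \<open>s (f k) < e/2\<close> by fastforce
        qed simp
      qed simp
      then show ?thesis by blast
    next
      case False
      then obtain c N0 where "c > 0" and c: "\<And>k. k \<ge> N0 \<Longrightarrow> s (f k) \<ge> c" by (meson not_le)
      have "Cauchy f"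
        unfolding Cauchy_def dist_real_def
      proof (intro allI impI)
        fix e :: real assume "e > 0"
        obtain N where N: "\<forall>n n'. N \<le> n \<longrightarrow> N \<le> n' \<longrightarrow> d (f n) (f n') < min e c"
          using C[of "min e c"] \<open>e>0\<close> \<open>c>0\<close> by auto
        show "\<exists>M. \<forall>m\<ge>M. \<forall>n\<ge>M. \<bar>f m - f n\<bar> < e"
        proof (intro exI[of _ "max N N0"] allI impI)
          fix m n assume "m \<ge> max N N0" "n \<ge> max N N0"
          then have "d (f m) (f n) < min e c" "s (f m) \<ge> c" using N c by auto
          then have "d (f m) (f n) = \<bar>f m - f n\<bar> + \<bar>s (f m) - s (f n)\<bar>" using d_big by force
          then show "\<bar>f m - f n\<bar> < e" using \<open>d (f m) (f n) < min e c\<close>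
            by (smt (verit) abs_ge_zero)
        qed
      qed
      then obtain L where L: "f \<longlonglongrightarrow> L" using convergent_eq_Cauchy by blast
      have sL: "(\<lambda>n. s (f n)) \<longlonglongrightarrow> s L"
        using L cont by (metis UNIV_I continuous_on_def filterlim_compose tendsto_at_iff_tendsto_nhds) 
      have "limitin M.mtopology f L sequentially"
        unfolding M.limitin_metric
      proof (intro conjI allI impI)
        fix e :: real assume "e > 0"
        have "((\<lambda>n. \<bar>f n - L\<bar> + \<bar>s (f n) - s L\<bar>) \<longlongrightarrow> 0) sequentially"
          using tendsto_add[OF tendsto_rabs_zero[OF L[THEN LIM_zero]] tendsto_rabs_zero[OF sL[THEN LIM_zero]]] by simp
        then have "eventually (\<lambda>n. \<bar>f n - L\<bar> + \<bar>s (f n) - s L\<bar> < e) sequentially"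
          using \<open>e>0\<close> by (rule order_tendstoD)
        then show "eventually (\<lambda>n. f n \<in> UNIV \<and> d (f n) L < e) sequentially"
          by eventually_elim (use dxy_le le_less_trans in blast)
      qed simp
      then show ?thesis by blast
    qed
  qed
  show ?thesis unfolding completely_metrizable_space_def
    using ms comp top by metis
qed

lemma homeo_T:
  fixes H :: "real \<Rightarrow> real"
  assumes cont: "continuous_on UNIV H" and inj: "inj H" and sur: "surj H" and H0: "H 0 = 0"
  shows "Ttop (s \<circ> H) homeomorphic_space Ttop s"
proof -
  have om: "open (H ` U)" if "open U" for U
    using invariance_of_domain[OF continuous_on_subset[OF cont] that] inj
    by (meson inj_on_subset subset_UNIV)
  have "homeomorphic_map (Ttop (s \<circ> H)) (Ttop s) H"
  proof (rule bijective_open_imp_homeomorphic_map)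
    show "continuous_map (Ttop (s \<circ> H)) (Ttop s) H"
      unfolding continuous_map_def
    proof (intro conjI allI impI ballI)
      fix V assume "openin (Ttop s) V"
      then have V: "open V" "0 \<in> V \<Longrightarrow> \<exists>e>0. {x. s x < e} \<subseteq> V" by (auto simp: openin_T)
      show "openin (Ttop (s \<circ> H)) {x \<in> topspace (Ttop (s \<circ> H)). H x \<in> V}"
        unfolding openin_T
      proof (intro conjI impI)
        show "open {x \<in> topspace (Ttop (s \<circ> H)). H x \<in> V}"
          using open_vimage[OF V(1) cont] by (simp add: vimage_def)
        assume "0 \<in> {x \<in> topspace (Ttop (s \<circ> H)). H x \<in> V}"
        then have "0 \<in> V" using H0 by simp
        then obtain e where "e>0" "{x. s x < e} \<subseteq> V" using V by auto
        then show "\<exists>e>0. {x. (s \<circ> H) x < e} \<subseteq> {x \<in> topspace (Ttop (s \<circ> H)). H x \<in> V}"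
          by (intro exI[of _ e]) auto
      qed
    qed simp
    show "open_map (Ttop (s \<circ> H)) (Ttop s) H"
      unfolding open_map_def
    proof (intro allI impI)
      fix U assume "openin (Ttop (s \<circ> H)) U"
      then have U: "open U" "0 \<in> U \<Longrightarrow> \<exists>e>0. {x. s (H x) < e} \<subseteq> U" by (auto simp: openin_T)
      show "openin (Ttop s) (H ` U)" unfolding openin_T
      proof (intro conjI impI)
        show "open (H ` U)" using om U(1) .
        assume "0 \<in> H ` U"
        then have "0 \<in> U" using H0 inj by (metis imageE injD)
        then obtain e where "e>0" "{x. s (H x) < e} \<subseteq> U" using U by auto
        have "{x. s x < e} \<subseteq> H ` U"
        proof
          fix y assume "y \<in> {x. s x < e}"
          obtain x where "y = H x" using sur by (metis surjD)
          then show "y \<in> H ` U" using \<open>y \<in> {x. s x < e}\<close> \<open>{x. s (H x) < e} \<subseteq> U\<close> by auto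
        qed
        then show "\<exists>e>0. {x. s x < e} \<subseteq> H ` U" using \<open>e>0\<close> by blast
      qed
    qed
    show "H ` topspace (Ttop (s \<circ> H)) = topspace (Ttop s)" using sur by simp
    show "inj_on H (topspace (Ttop (s \<circ> H)))" using inj by simp
  qed
  then show ?thesis by (rule homeomorphic_map_imp_homeomorphic_space)
qed

definition KK :: "real \<Rightarrow> real \<Rightarrow> real" where "KK c x = exp (c * sqrt (1 + x\<^sup>2))"
definition RR :: "real \<Rightarrow> real \<Rightarrow> real" where
  "RR c x = (KK c x - 1) * sin (pi*x) * cos (pi*x) / ((cos (pi*x))\<^sup>2 + KK c x * (sin (pi*x))\<^sup>2)"
definition HH :: "real \<Rightarrow> real \<Rightarrow> real" where "HH c x = x + arctan (RR c x) / pi"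

lemma KK_pos: "KK c x > 0" by (simp add: KK_def)

lemma den_pos: fixes K t :: real assumes "K > 0" shows "(cos t)\<^sup>2 + K * (sin t)\<^sup>2 > 0"
proof (cases "cos t = 0")
  case True
  then have "(sin t)\<^sup>2 = 1" using sin_cos_squared_add[of t] by simp
  then show ?thesis using True assms by simp
next
  case False
  then have "(cos t)\<^sup>2 > 0" by simp
  moreover have "K * (sin t)\<^sup>2 \<ge> 0" using assms by simp
  ultimately show ?thesis by linarith
qed

lemma alg_key:
  fixes K K' s co p :: real
  assumes "s\<^sup>2 + co\<^sup>2 = 1" "K > 0" "p > 0"
  defines "D \<equiv> co\<^sup>2 + K * s\<^sup>2" and "N \<equiv> (K - 1) * s * co"
  defines "N' \<equiv> K' * s * co + (K - 1) * p * (co\<^sup>2 - s\<^sup>2)" and "D' \<equiv> K' * s\<^sup>2 + 2 * p * (K - 1) * s * co"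
  shows "1 + inverse (1 + (N/D)\<^sup>2) * ((N' * D - N * D') / D\<^sup>2) / p = (K' * s * co + p * K) / (p * (co\<^sup>2 + K\<^sup>2 * s\<^sup>2))"
proof -
  have Dp: "D > 0" unfolding D_def using assms(1,2)
    by (smt (verit, ccfv_SIG) mult_pos_pos zero_less_power2 zero_le_power2 mult_nonneg_nonneg)
  have E: "co\<^sup>2 + K\<^sup>2 * s\<^sup>2 > 0" using assms(1,2)
    by (smt (verit, ccfv_SIG) mult_pos_pos zero_less_power2 zero_le_power2 mult_nonneg_nonneg)
  have one: "1 + (N/D)\<^sup>2 = (co\<^sup>2 + K\<^sup>2 * s\<^sup>2) / D\<^sup>2"
  proof -
    have "D\<^sup>2 + N\<^sup>2 = (co\<^sup>2 + K\<^sup>2 * s\<^sup>2) * (s\<^sup>2 + co\<^sup>2)" unfolding D_def N_def by algebra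
    then have "D\<^sup>2 + N\<^sup>2 = co\<^sup>2 + K\<^sup>2 * s\<^sup>2" using assms(1) by simp
    moreover have "1 + (N/D)\<^sup>2 = (D\<^sup>2 + N\<^sup>2) / D\<^sup>2" using Dp by (simp add: field_simps)
    ultimately show ?thesis by simp
  qed
  have two: "N' * D - N * D' = K' * s * co + (K - 1) * p * (co\<^sup>2 - K * s\<^sup>2)"
  proof -
    have "N' * D - N * D' = K' * s * co * (s\<^sup>2 + co\<^sup>2) + (K - 1) * p * (co\<^sup>2 - K * s\<^sup>2) * (s\<^sup>2 + co\<^sup>2)"
      unfolding D_def N_def N'_def D'_def by algebra
    then show ?thesis using assms(1) by simp
  qed
  have "inverse (1 + (N/D)\<^sup>2) * ((N' * D - N * D') / D\<^sup>2) = (K' * s * co + (K - 1) * p * (co\<^sup>2 - K * s\<^sup>2)) / (co\<^sup>2 + K\<^sup>2 * s\<^sup>2)"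
  proof -
    have g: "inverse (A / B) * (X / B) = X / A" if "B \<noteq> 0" for A B X :: real
      using that by (simp add: field_simps)
    show ?thesis unfolding one two using Dp by (intro g) simp
  qed
  then have "1 + inverse (1 + (N/D)\<^sup>2) * ((N' * D - N * D') / D\<^sup>2) / p
     = 1 + (K' * s * co + (K - 1) * p * (co\<^sup>2 - K * s\<^sup>2)) / (p * (co\<^sup>2 + K\<^sup>2 * s\<^sup>2))" by simp
  also have "\<dots> = (p * (co\<^sup>2 + K\<^sup>2 * s\<^sup>2) + K' * s * co + (K - 1) * p * (co\<^sup>2 - K * s\<^sup>2)) / (p * (co\<^sup>2 + K\<^sup>2 * s\<^sup>2))"
  proof -
    have g2: "1 + X / Y = (Y + X) / Y" if "Y \<noteq> 0" for X Y :: real using that by (simp add: field_simps)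
    have "p * (co\<^sup>2 + K\<^sup>2 * s\<^sup>2) \<noteq> 0" using E assms(3) by simp
    then show ?thesis by (subst g2) (auto simp: algebra_simps)
  qed
  also have "p * (co\<^sup>2 + K\<^sup>2 * s\<^sup>2) + K' * s * co + (K - 1) * p * (co\<^sup>2 - K * s\<^sup>2) = K' * s * co + p * K * (s\<^sup>2 + co\<^sup>2)"
    by algebra
  finally show ?thesis using assms(1) by simp
qed

lemma HH_deriv:
  fixes c x :: real
  defines "K \<equiv> KK c x" and "s \<equiv> sin (pi*x)" and "co \<equiv> cos (pi*x)"
  defines "K' \<equiv> KK c x * (c * x / sqrt (1 + x\<^sup>2))"
  shows "(HH c has_real_derivative (K' * s * co + pi * K) / (pi * (co\<^sup>2 + K\<^sup>2 * s\<^sup>2))) (at x)"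
proof -
  have dK: "(KK c has_real_derivative K') (at x)"
  proof -
    have p: "1 + x\<^sup>2 > 0" by (simp add: add_pos_nonneg)
    have d1: "((\<lambda>x. 1 + x\<^sup>2) has_real_derivative 2 * x) (at x)"
      by (rule derivative_eq_intros refl | simp)+
    have d2: "((\<lambda>x. sqrt (1 + x\<^sup>2)) has_real_derivative inverse (sqrt (1 + x\<^sup>2)) / 2 * (2 * x)) (at x)"
      by (rule DERIV_chain2[OF DERIV_real_sqrt[OF p] d1])
    have d3: "((\<lambda>x. c * sqrt (1 + x\<^sup>2)) has_real_derivative c * (inverse (sqrt (1 + x\<^sup>2)) / 2 * (2 * x))) (at x)"
      by (rule DERIV_cmult[OF d2])
    have d4: "((\<lambda>x. exp (c * sqrt (1 + x\<^sup>2))) has_real_derivative exp (c * sqrt (1 + x\<^sup>2)) * (c * (inverse (sqrt (1 + x\<^sup>2)) / 2 * (2 * x)))) (at x)"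
      by (rule DERIV_chain2[OF DERIV_exp d3])
    then show ?thesis unfolding KK_def[abs_def] K'_def by (simp add: field_simps)
  qed
  have ds: "((\<lambda>x. sin (pi*x)) has_real_derivative pi * co) (at x)" unfolding co_def
    by (rule derivative_eq_intros refl | simp)+
  have dco: "((\<lambda>x. cos (pi*x)) has_real_derivative - pi * s) (at x)" unfolding s_def
    by (rule derivative_eq_intros refl | simp)+
  have dc1: "((\<lambda>x. 1::real) has_real_derivative 0) (at x)" by simp
  define N where "N = (K - 1) * s * co"
  define D where "D = co\<^sup>2 + K * s\<^sup>2"
  define N' where "N' = K' * s * co + (K - 1) * pi * (co\<^sup>2 - s\<^sup>2)"
  define D' where "D' = K' * s\<^sup>2 + 2 * pi * (K - 1) * s * co"
  have dN: "((\<lambda>x. (KK c x - 1) * sin (pi*x) * cos (pi*x)) has_real_derivative N') (at x)"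
  proof -
    have "((\<lambda>x. (KK c x - 1) * sin (pi*x) * cos (pi*x)) has_real_derivative
       (K' * s + (K - 1) * (pi * co)) * co + ((K - 1) * s) * (- pi * s)) (at x)"
      using DERIV_mult[OF DERIV_mult[OF DERIV_diff[OF dK dc1] ds] dco]
      unfolding K_def s_def co_def by (simp add: ac_simps)
    moreover have "(K' * s + (K - 1) * (pi * co)) * co + ((K - 1) * s) * (- pi * s) = N'"
      unfolding N'_def by (simp add: algebra_simps power2_eq_square)
    ultimately show ?thesis by simp
  qed
  have dD: "((\<lambda>x. (cos (pi*x))\<^sup>2 + KK c x * (sin (pi*x))\<^sup>2) has_real_derivative D') (at x)"
  proof -
    have "((\<lambda>x. cos (pi*x) * cos (pi*x) + KK c x * (sin (pi*x) * sin (pi*x))) has_real_derivative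
       ((- pi * s) * co + co * (- pi * s)) + (K' * (s * s) + K * ((pi * co) * s + s * (pi * co)))) (at x)"
      using DERIV_add[OF DERIV_mult[OF dco dco] DERIV_mult[OF dK DERIV_mult[OF ds ds]]]
      unfolding K_def s_def co_def by (simp add: ac_simps)
    moreover have "((- pi * s) * co + co * (- pi * s)) + (K' * (s * s) + K * ((pi * co) * s + s * (pi * co))) = D'"
      unfolding D'_def by (simp add: algebra_simps power2_eq_square)
    ultimately show ?thesis by (simp add: power2_eq_square)
  qed
  have Dpos: "D > 0" unfolding D_def K_def s_def co_def using den_pos[OF KK_pos] .
  have dR: "(RR c has_real_derivative (N' * D - N * D') / D\<^sup>2) (at x)"
  proof -
    have "((\<lambda>x. (KK c x - 1) * sin (pi*x) * cos (pi*x) / ((cos (pi*x))\<^sup>2 + KK c x * (sin (pi*x))\<^sup>2))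
       has_real_derivative (N' * D - N * D') / (D * D)) (at x)"
      using DERIV_divide[OF dN dD] Dpos unfolding N_def D_def K_def s_def co_def by simp
    then show ?thesis unfolding RR_def[abs_def] by (simp add: power2_eq_square)
  qed
  have RN: "RR c x = N / D" unfolding RR_def N_def D_def K_def s_def co_def ..
  have "(HH c has_real_derivative 1 + inverse (1 + (N/D)\<^sup>2) * ((N' * D - N * D') / D\<^sup>2) / pi) (at x)"
  proof -
    have "((\<lambda>x. arctan (RR c x)) has_real_derivative inverse (1 + (RR c x)\<^sup>2) * ((N' * D - N * D') / D\<^sup>2)) (at x)"
      by (rule DERIV_chain2[OF DERIV_arctan dR])
    from DERIV_add[OF DERIV_ident DERIV_cdivide[OF this, of pi]]
    show ?thesis unfolding HH_def[abs_def] RN by simp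
  qed
  moreover have "1 + inverse (1 + (N/D)\<^sup>2) * ((N' * D - N * D') / D\<^sup>2) / pi = (K' * s * co + pi * K) / (pi * (co\<^sup>2 + K\<^sup>2 * s\<^sup>2))"
    unfolding N_def D_def N'_def D'_def
    by (rule alg_key) (auto simp: s_def co_def K_def KK_pos)
  ultimately show ?thesis by simp
qed

lemma HH_deriv_pos:
  fixes c x :: real
  assumes "0 < c" "c < pi"
  shows "\<exists>y. (HH c has_real_derivative y) (at x) \<and> y > 0"
proof -
  define K where "K = KK c x"
  define s where "s = sin (pi*x)"
  define co where "co = cos (pi*x)"
  define q where "q = x / sqrt (1 + x\<^sup>2)"
  have K: "K > 0" unfolding K_def by (rule KK_pos)
  have sc: "s\<^sup>2 + co\<^sup>2 = 1" unfolding s_def co_def by simp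
  have q: "\<bar>q\<bar> \<le> 1"
  proof -
    have "\<bar>x\<bar> \<le> sqrt (1 + x\<^sup>2)" using real_sqrt_ge_abs1[of x 1] by (simp add: add.commute)
    moreover have "sqrt (1 + x\<^sup>2) > 0" by (simp add: add_pos_nonneg)
    ultimately have "\<bar>x\<bar> / sqrt (1 + x\<^sup>2) \<le> 1" by (simp only: divide_le_eq_1_pos)
    moreover have "\<bar>q\<bar> = \<bar>x\<bar> / sqrt (1 + x\<^sup>2)" unfolding q_def abs_divide
      using \<open>sqrt (1 + x\<^sup>2) > 0\<close> by (simp only: abs_of_pos)
    ultimately show ?thesis by simp
  qed
  have sco: "\<bar>s * co\<bar> \<le> 1/2"
  proof -
    have "0 \<le> (s - co)\<^sup>2" "0 \<le> (s + co)\<^sup>2" by simp_all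
    then have "2 * (s * co) \<le> s\<^sup>2 + co\<^sup>2" "- (2 * (s * co)) \<le> s\<^sup>2 + co\<^sup>2"
      by (simp_all add: power2_eq_square algebra_simps)
    then show ?thesis using sc by linarith
  qed
  have "\<bar>q\<bar> * \<bar>s * co\<bar> \<le> 1 * (1/2)" using q sco by (intro mult_mono) auto
  then have "\<bar>q * (s * co)\<bar> \<le> 1/2" by (simp add: abs_mult)
  then have "c * \<bar>q * (s * co)\<bar> \<le> c * (1/2)" using assms(1) by (intro mult_left_mono) auto
  then have "\<bar>c * q * (s * co)\<bar> \<le> c / 2" using assms(1) by (simp add: abs_mult mult.assoc)
  then have "c * q * (s * co) + pi > 0" using assms(2) by linarith
  then have "K * (c * q * (s * co) + pi) > 0" using K by simp
  then have "K * (c * q * (s * co)) + pi * K > 0" by (simp add: algebra_simps)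
  moreover have "K * q * c * s * co = K * (c * q * (s * co))" by simp
  ultimately have num: "K * (c * q) * s * co + pi * K > 0" by (simp add: ac_simps)
  have den: "pi * (co\<^sup>2 + K\<^sup>2 * s\<^sup>2) > 0"
    using den_pos[of "K\<^sup>2" "pi*x"] K unfolding s_def co_def by simp
  show ?thesis
    using HH_deriv[of c x] num den unfolding K_def s_def co_def q_def
    by (intro exI conjI) (assumption, simp add: mult.assoc)
qed

lemma HH_mono: assumes "0 < c" "c < pi" "x < y" shows "HH c x < HH c y"
  using DERIV_pos_imp_increasing[OF assms(3)] HH_deriv_pos[OF assms(1,2)] by blast

lemma HH_inj: assumes "0 < c" "c < pi" shows "inj (HH c)"
  by (metis HH_mono[OF assms] injI less_irrefl linorder_neqE_linordered_idom)

lemma HH_cont: assumes "0 < c" "c < pi" shows "continuous_on UNIV (HH c)"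
  by (meson DERIV_isCont HH_deriv_pos[OF assms] continuous_at_imp_continuous_on)

lemma HH_close: "\<bar>HH c x - x\<bar> < 1/2"
proof -
  have "\<bar>arctan (RR c x)\<bar> < pi/2" using arctan_bounded[of "RR c x"] by linarith
  then have "\<bar>arctan (RR c x)\<bar> / pi < (pi/2) / pi" by (rule divide_strict_right_mono) simp
  then have "\<bar>arctan (RR c x)\<bar> / pi < 1/2" by simp
  moreover have "\<bar>HH c x - x\<bar> = \<bar>arctan (RR c x)\<bar> / pi" unfolding HH_def abs_divide by simp
  ultimately show ?thesis by simp
qed

lemma HH_surj: assumes "0 < c" "c < pi" shows "surj (HH c)"
proof -
  have "y \<in> range (HH c)" for y
  proof -
    have "HH c (y - 1) \<le> y" "y \<le> HH c (y + 1)"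
      using HH_close[of c "y - 1"] HH_close[of c "y+1"] by linarith+
    moreover have "\<forall>x. y - 1 \<le> x \<and> x \<le> y + 1 \<longrightarrow> isCont (HH c) x"
      using HH_cont[OF assms] by (simp add: continuous_on_eq_continuous_at)
    ultimately obtain x where "HH c x = y"
      using IVT[of "HH c" "y - 1" y "y + 1"] by force
    then show ?thesis by blast
  qed
  then show ?thesis by blast
qed

lemma RR_zero_cos: "cos (pi * x) = 0 \<Longrightarrow> RR c x = 0" unfolding RR_def by simp

lemma HH_0: "HH c 0 = 0" unfolding HH_def RR_def by simp
lemma HH_half: "HH c (1/2) = 1/2" unfolding HH_def RR_def by simp
lemma HH_mhalf: "HH c (-1/2) = -1/2" unfolding HH_def RR_def by simp

lemma HH_sin:
  "sin (pi * HH c x) = sin (pi*x) * KK c x / sqrt ((cos (pi*x))\<^sup>2 + (KK c x)\<^sup>2 * (sin (pi*x))\<^sup>2)"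
proof -
  define K where "K = KK c x"
  define s where "s = sin (pi*x)"
  define co where "co = cos (pi*x)"
  define D where "D = co\<^sup>2 + K * s\<^sup>2"
  define N where "N = (K - 1) * s * co"
  have K: "K > 0" unfolding K_def by (rule KK_pos)
  have sc: "s\<^sup>2 + co\<^sup>2 = 1" unfolding s_def co_def by simp
  have Dp: "D > 0" unfolding D_def s_def co_def using den_pos[OF K] .
  have E: "co\<^sup>2 + K\<^sup>2 * s\<^sup>2 > 0" using den_pos[of "K\<^sup>2" "pi*x"] K unfolding s_def co_def by simp
  have R: "RR c x = N / D" unfolding RR_def N_def D_def K_def s_def co_def ..
  have "D\<^sup>2 + N\<^sup>2 = (co\<^sup>2 + K\<^sup>2 * s\<^sup>2) * (s\<^sup>2 + co\<^sup>2)" unfolding D_def N_def by algebra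
  then have DN: "D\<^sup>2 + N\<^sup>2 = co\<^sup>2 + K\<^sup>2 * s\<^sup>2" using sc by simp
  have "1 + (N/D)\<^sup>2 = (D\<^sup>2 + N\<^sup>2) / D\<^sup>2" using Dp by (simp add: field_simps)
  then have sq: "sqrt (1 + (N/D)\<^sup>2) = sqrt (co\<^sup>2 + K\<^sup>2 * s\<^sup>2) / D"
    using DN Dp by (simp add: real_sqrt_divide)
  have num: "s * D + co * N = K * s * (s\<^sup>2 + co\<^sup>2)" unfolding D_def N_def by algebra
  have "sin (pi * HH c x) = sin (pi * x + arctan (N/D))"
    unfolding HH_def R by (simp add: distrib_left)
  also have "\<dots> = (s + co * (N/D)) / sqrt (1 + (N/D)\<^sup>2)"
    unfolding sin_add cos_arctan sin_arctan s_def co_def by (simp add: add_divide_distrib)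
  also have "s + co * (N/D) = (s * D + co * N) / D" using Dp by (simp add: field_simps)
  also have "\<dots> = K * s / D" using num sc by simp
  finally show ?thesis unfolding sq using Dp E
    by (simp add: K_def s_def co_def field_simps)
qed

definition sig0 :: "real \<Rightarrow> real" where
  "sig0 y = max \<bar>sin (pi * y)\<bar> (min \<bar>y\<bar> (1 / (1 + \<bar>y\<bar>)))"

lemma sig0_cont: "continuous_on UNIV sig0"
  unfolding sig0_def by (intro continuous_intros) (auto simp: add_pos_nonneg)

lemma sig0_0: "sig0 0 = 0" unfolding sig0_def by simp

lemma sig0_pos: "y \<noteq> 0 \<Longrightarrow> sig0 y > 0"
  unfolding sig0_def by (simp add: add_pos_nonneg less_max_iff_disj)

lemma abs_sin_HH:
  "\<bar>sin (pi * HH c x)\<bar> = \<bar>sin (pi*x)\<bar> * (KK c x / sqrt ((cos (pi*x))\<^sup>2 + (KK c x)\<^sup>2 * (sin (pi*x))\<^sup>2))"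
  unfolding HH_sin using KK_pos[of c x] by (simp add: abs_mult abs_div_pos)

lemma ratio_mono:
  fixes a b K K' :: real
  assumes "a \<ge> 0" "b \<ge> 0" "0 < K" "K \<le> K'" "a + K\<^sup>2 * b > 0"
  shows "K / sqrt (a + K\<^sup>2 * b) \<le> K' / sqrt (a + K'\<^sup>2 * b)"
proof -
  have K': "K' > 0" using assms by simp
  have "K\<^sup>2 * b \<le> K'\<^sup>2 * b" using assms by (intro mult_right_mono power_mono) auto
  then have p2: "a + K'\<^sup>2 * b > 0" using assms(5) by linarith
  have ka: "K\<^sup>2 * a \<le> K'\<^sup>2 * a" using assms by (intro mult_right_mono power_mono) auto
  have e1: "K\<^sup>2 * (a + K'\<^sup>2 * b) = K\<^sup>2 * a + K\<^sup>2 * K'\<^sup>2 * b" by (simp add: distrib_left mult.assoc)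
  have e2: "K'\<^sup>2 * (a + K\<^sup>2 * b) = K'\<^sup>2 * a + K\<^sup>2 * K'\<^sup>2 * b" by (simp add: distrib_left mult.assoc mult.left_commute)
  have "K\<^sup>2 * (a + K'\<^sup>2 * b) \<le> K'\<^sup>2 * (a + K\<^sup>2 * b)" unfolding e1 e2 by (rule add_right_mono[OF ka])
  then have "sqrt (K\<^sup>2 * (a + K'\<^sup>2 * b)) \<le> sqrt (K'\<^sup>2 * (a + K\<^sup>2 * b))" by (rule real_sqrt_le_mono)
  then have le: "K * sqrt (a + K'\<^sup>2 * b) \<le> K' * sqrt (a + K\<^sup>2 * b)"
    using assms(3) K' by (simp only: real_sqrt_mult real_sqrt_abs abs_of_pos)
  have g: "\<And>x y u v :: real. u > 0 \<Longrightarrow> v > 0 \<Longrightarrow> x * v \<le> y * u \<Longrightarrow> x / u \<le> y / v"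
    by (simp add: divide_simps)
  have sA: "sqrt (a + K\<^sup>2 * b) > 0" using assms(5) by simp
  have sB: "sqrt (a + K'\<^sup>2 * b) > 0" using p2 by simp
  show ?thesis by (rule g[OF sA sB le])
qed

lemma KK_mono: "c \<le> c' \<Longrightarrow> KK c x \<le> KK c' x"
  unfolding KK_def by (simp add: mult_right_mono)

lemma abs_sin_HH_mono:
  assumes "c \<le> c'" shows "\<bar>sin (pi * HH c x)\<bar> \<le> \<bar>sin (pi * HH c' x)\<bar>"
proof -
  have a: "(cos (pi*x))\<^sup>2 + (KK c x)\<^sup>2 * (sin (pi*x))\<^sup>2 > 0"
    using den_pos[of "(KK c x)\<^sup>2" "pi*x"] KK_pos[of c x] by simp
  have "KK c x / sqrt ((cos (pi*x))\<^sup>2 + (KK c x)\<^sup>2 * (sin (pi*x))\<^sup>2)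
     \<le> KK c' x / sqrt ((cos (pi*x))\<^sup>2 + (KK c' x)\<^sup>2 * (sin (pi*x))\<^sup>2)"
    by (rule ratio_mono) (use a KK_pos KK_mono[OF assms] in auto)
  then show ?thesis unfolding abs_sin_HH by (intro mult_left_mono) auto
qed

lemma abs_sin_eq: "\<bar>a\<bar> \<le> 1 \<Longrightarrow> \<bar>sin (pi * a)\<bar> = sin (pi * \<bar>a\<bar>)"
proof (cases "a \<ge> 0")
  case True
  assume "\<bar>a\<bar> \<le> 1"
  then have "sin (pi * a) \<ge> 0" using True by (intro sin_ge_zero) auto
  then show ?thesis using True by simp
next
  case False
  assume "\<bar>a\<bar> \<le> 1"
  have "0 \<le> pi * (-a)" using False by (intro mult_nonneg_nonneg) auto
  moreover have "pi * (-a) \<le> pi * 1" using \<open>\<bar>a\<bar> \<le> 1\<close> False by (intro mult_left_mono) auto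
  ultimately have "sin (pi * (-a)) \<ge> 0" by (intro sin_ge_zero) auto
  then show ?thesis using False by simp
qed

lemma sin_cmp:
  assumes "\<bar>a\<bar> \<le> 1/2" "\<bar>b\<bar> \<le> 1/2" "\<bar>sin (pi * a)\<bar> \<le> \<bar>sin (pi * b)\<bar>"
  shows "\<bar>a\<bar> \<le> \<bar>b\<bar>"
proof (rule ccontr)
  assume "\<not> \<bar>a\<bar> \<le> \<bar>b\<bar>"
  then have "pi * \<bar>b\<bar> < pi * \<bar>a\<bar>" by simp
  moreover have "pi * \<bar>a\<bar> \<le> pi/2" using assms(1) by simp
  moreover have "0 \<le> pi * \<bar>b\<bar>" by simp
  then have "- (pi/2) \<le> pi * \<bar>b\<bar>" using pi_gt_zero by linarith
  ultimately have "sin (pi * \<bar>b\<bar>) < sin (pi * \<bar>a\<bar>)" by (intro sin_monotone_2pi) auto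
  then show False using assms abs_sin_eq[of a] abs_sin_eq[of b] by simp
qed

lemma chainA:
  assumes "0 < c" "c \<le> c'" "c' < pi" "e > 0"
  shows "\<exists>e'>0. \<forall>x. sig0 (HH c' x) < e' \<longrightarrow> sig0 (HH c x) < e"
proof (intro exI[of _ "min (e/2) (1/4)"] conjI allI impI)
  show "min (e/2) (1/4) > 0" using assms by simp
  have c': "0 < c'" using assms by simp
  fix x assume h: "sig0 (HH c' x) < min (e/2) (1/4)"
  define a where "a = HH c x"
  define b where "b = HH c' x"
  have "\<bar>sin (pi * b)\<bar> < min (e/2) (1/4) \<and> min \<bar>b\<bar> (1 / (1 + \<bar>b\<bar>)) < min (e/2) (1/4)"
    using h unfolding sig0_def b_def by (simp only: max_less_iff_conj)
  then have sb: "\<bar>sin (pi * b)\<bar> < min (e/2) (1/4)" and mb: "min \<bar>b\<bar> (1 / (1 + \<bar>b\<bar>)) < min (e/2) (1/4)"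
    by auto
  have sa: "\<bar>sin (pi * a)\<bar> \<le> \<bar>sin (pi * b)\<bar>" unfolding a_def b_def by (rule abs_sin_HH_mono[OF assms(2)])
  have ma: "min \<bar>a\<bar> (1 / (1 + \<bar>a\<bar>)) < e"
  proof (cases "\<bar>b\<bar> < min (e/2) (1/4)")
    case True
    have xin: "\<bar>x\<bar> < 1/2"
    proof (rule ccontr)
      assume "\<not> \<bar>x\<bar> < 1/2"
      then have "x \<ge> 1/2 \<or> x \<le> -1/2" by auto
      then have "b \<ge> 1/2 \<or> b \<le> -1/2"
      proof
        assume "x \<ge> 1/2"
        then have "HH c' (1/2) \<le> HH c' x" using HH_mono[OF c' assms(3), of "1/2" x] by (metis order_le_less)
        then show ?thesis unfolding b_def HH_half by simp
      next
        assume "x \<le> -1/2"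
        then have "HH c' x \<le> HH c' (-1/2)" using HH_mono[OF c' assms(3), of x "-1/2"] by (metis order_le_less)
        then show ?thesis unfolding b_def HH_mhalf by simp
      qed
      then show False using True by auto
    qed
    have "\<bar>a\<bar> < 1/2"
    proof -
      have cp: "c < pi" using assms by linarith
      have "HH c x < HH c (1/2)" using xin HH_mono[OF assms(1) cp, of x "1/2"] by simp
      moreover have "HH c (-1/2) < HH c x" using xin HH_mono[OF assms(1) cp, of "-1/2" x] by simp
      ultimately have "HH c x < 1/2" "-1/2 < HH c x" using HH_half HH_mhalf by simp_all
      then show ?thesis unfolding a_def by linarith
    qed
    then have "\<bar>a\<bar> \<le> \<bar>b\<bar>" using sin_cmp[of a b] sa True by auto
    moreover have "\<bar>b\<bar> < e/2" using True by simp
    ultimately have "\<bar>a\<bar> < e" using \<open>e > 0\<close> by linarith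
    then show ?thesis by (simp add: min_less_iff_disj)
  next
    case False
    then have "1 / (1 + \<bar>b\<bar>) < min (e/2) (1/4)" using mb by (metis min_less_iff_disj)
    then have l1: "1 / (1 + \<bar>b\<bar>) < 1/4" and be: "1 / (1 + \<bar>b\<bar>) < e/2"
      by (simp_all only: min_less_iff_conj)
    have b3: "\<bar>b\<bar> > 3"
    proof (rule ccontr)
      assume "\<not> \<bar>b\<bar> > 3"
      then have "1 / 4 \<le> 1 / (1 + \<bar>b\<bar>)" by (intro divide_left_mono) auto
      then show False using l1 by linarith
    qed
    have "\<bar>a - x\<bar> < 1/2" "\<bar>b - x\<bar> < 1/2" using HH_close[of c x] HH_close[of c' x] unfolding a_def b_def by auto
    then have "\<bar>b - a\<bar> < 1" unfolding abs_less_iff by linarith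
    then have "\<bar>a\<bar> \<ge> \<bar>b\<bar> - 1" using abs_triangle_ineq2[of b a] by linarith
    then have "1 + \<bar>b\<bar> \<le> 2 * (1 + \<bar>a\<bar>)" using b3 by (smt (verit))
    then have "1 + \<bar>a\<bar> \<ge> (1 + \<bar>b\<bar>) / 2" by simp
    then have "1 / (1 + \<bar>a\<bar>) \<le> 1 / ((1 + \<bar>b\<bar>) / 2)" using b3
      by (intro divide_left_mono) auto
    also have "\<dots> = 2 * (1 / (1 + \<bar>b\<bar>))" by simp
    finally show ?thesis using be by linarith
  qed
  show "sig0 (HH c x) < e" unfolding sig0_def a_def[symmetric] using sa sb ma by auto
qed

lemma sinval:
  fixes s co r t K :: real
  assumes "s = t / r" "co = 1 / r" "r > 0" "t > 0" "K > 0"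
  shows "s * K / sqrt (co\<^sup>2 + K\<^sup>2 * s\<^sup>2) = t * K / sqrt (1 + (K * t)\<^sup>2)"
proof -
  have e0: "co\<^sup>2 + K\<^sup>2 * s\<^sup>2 = (1 + (K * t)\<^sup>2) / r\<^sup>2" using assms
    by (simp add: power_divide power_mult_distrib add_divide_distrib)
  have eq: "sqrt (co\<^sup>2 + K\<^sup>2 * s\<^sup>2) = sqrt (1 + (K * t)\<^sup>2) / r"
    unfolding e0 real_sqrt_divide real_sqrt_abs using assms(3) by simp
  have Q: "sqrt (1 + (K * t)\<^sup>2) > 0" by (simp add: add_pos_nonneg)
  have "s * K / sqrt (co\<^sup>2 + K\<^sup>2 * s\<^sup>2) = s * K / (sqrt (1 + (K * t)\<^sup>2) / r)" by (simp only: eq)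
  also have "\<dots> = t * K / sqrt (1 + (K * t)\<^sup>2)" using Q assms(3) unfolding assms(1) by (simp add: field_simps)
  finally show ?thesis .
qed

lemma uval_ge: assumes "u \<ge> 1" shows "u / sqrt (1 + u\<^sup>2) \<ge> 1/2"
proof -
  have "u\<^sup>2 \<ge> 1" using assms by (simp add: one_le_power)
  then have "1 + u\<^sup>2 \<le> (2*u)\<^sup>2" by (simp add: power_mult_distrib)
  then have "sqrt (1 + u\<^sup>2) \<le> sqrt ((2*u)\<^sup>2)" by (rule real_sqrt_le_mono)
  also have "sqrt ((2*u)\<^sup>2) = 2 * u" using assms by (simp only: real_sqrt_abs)
  finally have le: "sqrt (1 + u\<^sup>2) \<le> 2 * u" .
  have pos: "sqrt (1 + u\<^sup>2) > 0" by (simp add: add_pos_nonneg)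
  have "1/2 * sqrt (1 + u\<^sup>2) \<le> u" using le by simp
  then show ?thesis using pos by (simp only: le_divide_eq) simp
qed

lemma uval_le: assumes "u \<ge> 0" shows "u / sqrt (1 + u\<^sup>2) \<le> u"
proof -
  have "sqrt (1 + u\<^sup>2) \<ge> 1" by simp
  then have "u / sqrt (1 + u\<^sup>2) \<le> u / 1" using assms by (intro divide_left_mono) (auto simp: add_pos_nonneg)
  then show ?thesis by simp
qed

lemma chainB:
  assumes "0 < c" "c < c'" "c' < pi" "e' > 0"
  shows "\<exists>x. sig0 (HH c x) < e' \<and> sig0 (HH c' x) \<ge> 1/2"
proof -
  obtain n :: nat where n1: "real n > (2*c - ln e') / (2*(c'-c))" and n2: "real n > 1/e'" and n3: "real n \<ge> 1"
  proof -
    obtain m :: nat where "max (max ((2*c - ln e') / (2*(c'-c))) (1/e')) 1 < real m"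
      using reals_Archimedean2 by blast
    then show ?thesis using that[of m] by auto
  qed
  define t where "t = exp (- (c' * (2 * real n)))"
  define x where "x = 2 * real n + arctan t / pi"
  define r where "r = sqrt (1 + t\<^sup>2)"
  have t0: "t > 0" unfolding t_def by simp
  have t1: "t \<le> 1" unfolding t_def using assms by simp
  have r0: "r > 0" unfolding r_def by (simp add: add_pos_nonneg)
  have at0: "arctan t > 0" using t0 by simp
  have at1: "arctan t \<le> pi/4" using t1 arctan_le_iff[of t 1] arctan_one by simp
  have y0: "arctan t / pi > 0" using at0 by simp
  have y1: "arctan t / pi \<le> 1/4" using at1 by (simp add: divide_le_eq)
  have px: "pi * x = 2 * real n * pi + arctan t" unfolding x_def by (simp add: distrib_left)
  have sx: "sin (pi * x) = t / r" unfolding px sin_add by (simp add: sin_arctan r_def)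
  have cx: "cos (pi * x) = 1 / r" unfolding px cos_add by (simp add: cos_arctan r_def)
  have xge: "x \<ge> 2 * real n" using y0 unfolding x_def by simp
  have xle: "x \<le> 2 * real n + 1/4" using y1 unfolding x_def by simp
  have sq_ge: "sqrt (1 + x\<^sup>2) \<ge> x" using real_sqrt_ge_abs1[of x 1] by (simp add: add.commute)
  have sq_le: "sqrt (1 + x\<^sup>2) \<le> 1 + x"
  proof -
    have "1 + x\<^sup>2 \<le> (1 + x)\<^sup>2" using xge by (simp add: power2_eq_square algebra_simps)
    then have "sqrt (1 + x\<^sup>2) \<le> sqrt ((1 + x)\<^sup>2)" by (rule real_sqrt_le_mono)
    then show ?thesis using xge by simp
  qed
  have val: "sin (pi * HH cc x) = t * KK cc x / sqrt (1 + (KK cc x * t)\<^sup>2)" for cc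
    unfolding HH_sin using sinval[OF sx cx r0 t0 KK_pos] .
  have u1: "KK c' x * t \<ge> 1"
  proof -
    have "KK c' x * t = exp (c' * sqrt (1 + x\<^sup>2) - c' * (2 * real n))"
      unfolding KK_def t_def by (simp add: exp_diff exp_minus field_simps)
    moreover have "c' * sqrt (1 + x\<^sup>2) - c' * (2 * real n) \<ge> 0"
      using sq_ge xge assms by (simp add: mult_left_mono)
    ultimately show ?thesis by simp
  qed
  have big: "\<bar>sin (pi * HH c' x)\<bar> \<ge> 1/2"
  proof -
    have "\<bar>t * KK c' x\<bar> = KK c' x * t"
      using t0 KK_pos[of c' x] by (simp add: abs_mult mult.commute)
    then show ?thesis using uval_ge[OF u1] unfolding val by simp
  qed
  have sig_big: "sig0 (HH c' x) \<ge> 1/2" unfolding sig0_def using big by simp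
  have u2: "KK c x * t < e'"
  proof -
    have "KK c x * t = exp (c * sqrt (1 + x\<^sup>2) - c' * (2 * real n))"
      unfolding KK_def t_def by (simp add: exp_diff exp_minus field_simps)
    moreover have "c * sqrt (1 + x\<^sup>2) \<le> c * (2 * real n + 2)"
      using sq_le xle assms(1) by (intro mult_left_mono) auto
    moreover have "c * (2 * real n + 2) - c' * (2 * real n) < ln e'"
    proof -
      have "(2*c - ln e') < real n * (2*(c'-c))" using n1 assms by (simp add: divide_less_eq)
      then show ?thesis by (simp add: algebra_simps)
    qed
    ultimately have "KK c x * t < exp (ln e')" by simp
    then show ?thesis using assms(4) by simp
  qed
  have small1: "\<bar>sin (pi * HH c x)\<bar> < e'"
  proof -
    have "0 \<le> KK c x * t" using t0 KK_pos[of c x] by simp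
    then have "KK c x * t / sqrt (1 + (KK c x * t)\<^sup>2) \<le> KK c x * t" by (rule uval_le)
    moreover have "KK c x * t / sqrt (1 + (KK c x * t)\<^sup>2) \<ge> 0" using t0 KK_pos[of c x] by simp
    ultimately show ?thesis using u2 unfolding val by (simp add: mult.commute)
  qed
  have small2: "1 / (1 + \<bar>HH c x\<bar>) < e'"
  proof -
    have "\<bar>HH c x - x\<bar> < 1/2" by (rule HH_close)
    then have "\<bar>HH c x\<bar> \<ge> x - 1/2" by linarith
    then have "1 + \<bar>HH c x\<bar> > real n" using xge n3 by linarith
    then have "1 / (1 + \<bar>HH c x\<bar>) < 1 / real n" using n3 by (intro divide_strict_left_mono) auto
    also have "1 / real n < e'" using n2 n3 assms(4) by (simp add: divide_less_eq mult.commute)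
    finally show ?thesis .
  qed
  have "sig0 (HH c x) < e'" unfolding sig0_def using small1 small2 by (simp add: min_less_iff_disj)
  then show ?thesis using sig_big by blast
qed

definition cpar :: "real \<Rightarrow> real" where "cpar t = arctan t + pi/2"

lemma cpar_pos: "0 < cpar t" unfolding cpar_def using arctan_lbound[of t] by linarith
lemma cpar_lt: "cpar t < pi" unfolding cpar_def using arctan_ubound[of t] by linarith
lemma cpar_mono: "t1 < t2 \<Longrightarrow> cpar t1 < cpar t2" unfolding cpar_def using arctan_monotone by simp

definition TT :: "real \<Rightarrow> real topology" where "TT t = Ttop (sig0 \<circ> HH (cpar t))"

lemma sHH_props:
  fixes c :: real assumes "0 < c" "c < pi"
  shows "continuous_on UNIV (sig0 \<circ> HH c)" "(sig0 \<circ> HH c) 0 = 0" "\<And>x. x \<noteq> 0 \<Longrightarrow> (sig0 \<circ> HH c) x > 0"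
proof -
  show "continuous_on UNIV (sig0 \<circ> HH c)"
    by (rule continuous_on_compose[OF HH_cont[OF assms]]) (rule continuous_on_subset[OF sig0_cont], simp)
  show "(sig0 \<circ> HH c) 0 = 0" by (simp add: HH_0 sig0_0)
  fix x :: real assume "x \<noteq> 0"
  then have "HH c x \<noteq> 0" using HH_inj[OF assms] HH_0 by (metis injD)
  then show "(sig0 \<circ> HH c) x > 0" by (simp add: sig0_pos)
qed

lemma TT_cms: "completely_metrizable_space (TT t)"
  unfolding TT_def using sHH_props[OF cpar_pos cpar_lt] by (intro cms_T) auto

lemma TT_L: "TT t \<in> L_family"
  unfolding L_family_def
  using TT_cms[of t] completely_metrizable_imp_metrizable_space metrizable_imp_Hausdorff_space
  by (auto simp: TT_def coarser_T_eucl)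

lemma TT_coarser: assumes "t1 \<le> t2" shows "coarser (TT t1) (TT t2)"
proof -
  have le: "cpar t1 \<le> cpar t2" using assms cpar_mono by (cases "t1 = t2") (auto simp: order_le_less)
  show ?thesis unfolding TT_def
    by (rule coarser_TT) (use chainA[OF cpar_pos le cpar_lt] in auto)
qed

lemma TT_neq: assumes "t1 < t2" shows "TT t1 \<noteq> TT t2"
proof -
  have "Ttop (sig0 \<circ> HH (cpar t2)) \<noteq> Ttop (sig0 \<circ> HH (cpar t1))"
  proof (rule neq_TT)
    show "continuous_on UNIV (sig0 \<circ> HH (cpar t2))" "(sig0 \<circ> HH (cpar t2)) 0 = 0"
      using sHH_props[OF cpar_pos cpar_lt] by auto
    show "(1/2::real) > 0" by simp
    fix e' :: real assume "e' > 0"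
    then show "\<exists>x. (sig0 \<circ> HH (cpar t1)) x < e' \<and> (sig0 \<circ> HH (cpar t2)) x \<ge> 1/2"
      using chainB[OF cpar_pos cpar_mono[OF assms] cpar_lt] by auto
  qed
  then show ?thesis unfolding TT_def by metis
qed

lemma TT_inj: "inj TT"
  by (rule injI) (metis TT_neq linorder_neqE_linordered_idom)

lemma TT_homeo: "TT t homeomorphic_space Ttop sig0"
  unfolding TT_def
  by (rule homeo_T[OF HH_cont[OF cpar_pos cpar_lt] HH_inj[OF cpar_pos cpar_lt] HH_surj[OF cpar_pos cpar_lt] HH_0])

theorem proposition7:
  shows "\<exists>J. J \<subseteq> L_family
    \<and> (\<forall>\<tau>\<in>J. \<forall>\<sigma>\<in>J. coarser \<tau> \<sigma> \<or> coarser \<sigma> \<tau>)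
    \<and> J \<approx> (UNIV :: real set)
    \<and> (\<forall>\<tau>\<in>J. completely_metrizable_space \<tau>)
    \<and> (\<forall>\<tau>\<in>J. \<forall>\<sigma>\<in>J. \<tau> homeomorphic_space \<sigma>)"
proof (intro exI[of _ "range TT"] conjI)
  show "range TT \<subseteq> L_family" using TT_L by auto
  show "\<forall>\<tau>\<in>range TT. \<forall>\<sigma>\<in>range TT. coarser \<tau> \<sigma> \<or> coarser \<sigma> \<tau>"
    using TT_coarser by (metis imageE linear)
  show "range TT \<approx> (UNIV :: real set)"
    using inj_on_image_eqpoll_self[OF TT_inj] .
  show "\<forall>\<tau>\<in>range TT. completely_metrizable_space \<tau>" using TT_cms by auto
  show "\<forall>\<tau>\<in>range TT. \<forall>\<sigma>\<in>range TT. \<tau> homeomorphic_space \<sigma>"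
    using TT_homeo homeomorphic_space_sym homeomorphic_space_trans by (metis imageE)
qed

end
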